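(* Let $\mathcal X\subseteq\mathbb{R}^d$ be compact, let $P$ be a probability measure supported on $\mathcal X$, let $r:\mathcal X\to\mathbb{R}$ be a measurable reward, and fix $\lambda\ge 0$. Let $T_\lambda:\mathbb{R}^d\to\mathcal X$ be a measurable map satisfying, for all $y$, $$T_\lambda(y)\in\operatorname*{argmax}_{x\in\mathcal X}\{r(x)-\lambda\|x-y\|^2\}.$$ Then the pushforward law $Q_\lambda=(T_\lambda)_\#P$ satisfies $$Q_\lambda\in\operatorname*{argmax}_{Q\in\Delta(\mathcal X)}\Big\{\mathbb E_Q[r]-\lambda\,\mathcal W_2^2(Q,P)\Big\}.$$
   Context: $\Delta(\mathcal X)$ is the set of probability measures on $\mathcal X$; $(T)_\#P$ is the law of $T(Y)$ for $Y\sim P$; $\mathcal W_2^2(Q,P)=\inf_{\gamma\in\Pi(Q,P)}\mathbb E_{(X,Y)\sim\gamma}\|X-Y\|_2^2$ with $\Pi(Q,P)$ the set of couplings; $\|\cdot\|$ is the Euclidean norm. *)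

theory Defs
  imports "HOL-Probability.Probability"
begin

text \<open>Delta(X): Borel probability measures on the ambient space giving full mass to X.\<close>
definition prob_on :: "'a::euclidean_space set \<Rightarrow> 'a measure \<Rightarrow> bool" where
  "prob_on X Q \<longleftrightarrow> prob_space Q \<and> sets Q = sets borel \<and> emeasure Q X = 1"

definition couplings :: "'a::euclidean_space measure \<Rightarrow> 'a measure \<Rightarrow> ('a \<times> 'a) measure set" where
  "couplings Q P = {\<gamma>. prob_space \<gamma> \<and> sets \<gamma> = sets (borel \<Otimes>\<^sub>M borel)
      \<and> distr \<gamma> borel fst = Q \<and> distr \<gamma> borel snd = P}"

definition W2sq :: "'a::euclidean_space measure \<Rightarrow> 'a measure \<Rightarrow> ennreal" where
  "W2sq Q P = (INF \<gamma>\<in>couplings Q P. \<integral>\<^sup>+ z. ennreal ((norm (fst z - snd z))\<^sup>2) \<partial>\<gamma>)"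

definition expect_ereal :: "'a measure \<Rightarrow> ('a \<Rightarrow> real) \<Rightarrow> ereal" where
  "expect_ereal Q r = enn2ereal (\<integral>\<^sup>+ x. ennreal (r x) \<partial>Q) - enn2ereal (\<integral>\<^sup>+ x. ennreal (- r x) \<partial>Q)"

definition objective :: "('a::euclidean_space \<Rightarrow> real) \<Rightarrow> real \<Rightarrow> 'a measure \<Rightarrow> 'a measure \<Rightarrow> ereal" where
  "objective r lam P Q = expect_ereal Q r - ereal lam * enn2ereal (W2sq Q P)"

end

theory Submission
  imports Defs
begin

lemma expect_integrable:
  assumes "integrable M f"
  shows "expect_ereal M f = ereal (\<integral>x. f x \<partial>M)"
proof -
  have a: "(\<integral>\<^sup>+ x. ennreal (f x) \<partial>M) \<noteq> \<infinity>" and b: "(\<integral>\<^sup>+ x. ennreal (- f x) \<partial>M) \<noteq> \<infinity>"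
    using assms unfolding real_integrable_def by auto
  obtain c where c: "(\<integral>\<^sup>+ x. ennreal (f x) \<partial>M) = ennreal c" "c \<ge> 0" using a
    by (cases "\<integral>\<^sup>+ x. ennreal (f x) \<partial>M" rule: ennreal_cases) auto
  obtain d where d: "(\<integral>\<^sup>+ x. ennreal (- f x) \<partial>M) = ennreal d" "d \<ge> 0" using b
    by (cases "\<integral>\<^sup>+ x. ennreal (- f x) \<partial>M" rule: ennreal_cases) auto
  show ?thesis
    unfolding expect_ereal_def real_lebesgue_integral_def[OF assms] c d using c(2) d(2) by (simp del: ennreal_neg)
qed

lemma expect_cases:
  assumes "prob_space M" "f \<in> borel_measurable M" "AE x in M. f x \<le> K"
  shows "expect_ereal M f = -\<infinity> \<or> (integrable M f \<and> expect_ereal M f = ereal (\<integral>x. f x \<partial>M))"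
proof -
  interpret prob_space M by fact
  have "(\<integral>\<^sup>+ x. ennreal (f x) \<partial>M) \<le> (\<integral>\<^sup>+ x. ennreal (max K 0) \<partial>M)"
    using assms(3) by (intro nn_integral_mono_AE) (auto intro: ennreal_leI)
  also have "\<dots> = ennreal (max K 0)" by (simp add: emeasure_space_1)
  finally have a: "(\<integral>\<^sup>+ x. ennreal (f x) \<partial>M) \<noteq> \<infinity>" by (auto simp: top_unique)
  show ?thesis
  proof (cases "(\<integral>\<^sup>+ x. ennreal (- f x) \<partial>M) = \<infinity>")
    case True
    obtain c where c: "(\<integral>\<^sup>+ x. ennreal (f x) \<partial>M) = ennreal c" "c \<ge> 0" using a
      by (cases "\<integral>\<^sup>+ x. ennreal (f x) \<partial>M" rule: ennreal_cases) auto
    have "expect_ereal M f = -\<infinity>" unfolding expect_ereal_def True c(1) using c(2) by simp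
    then show ?thesis by simp
  next
    case False
    then have "integrable M f" using a assms(2) unfolding real_integrable_def by auto
    then show ?thesis using expect_integrable by blast
  qed
qed


lemma AE_on:
  assumes "prob_on X Q" "closed X"
  shows "AE x in Q. x \<in> X"
proof -
  interpret prob_space Q using assms(1) unfolding prob_on_def by auto
  have s: "sets Q = sets borel" using assms(1) unfolding prob_on_def by auto
  have X: "X \<in> sets Q" using assms(2) s by simp
  have "measure Q X = 1" using assms(1) unfolding prob_on_def measure_def by simp
  then show ?thesis using AE_prob_1 X by auto
qed

theorem theorem4p1:
  fixes X :: "'a::euclidean_space set" and P :: "'a measure"
    and r :: "'a \<Rightarrow> real" and lam :: real and T :: "'a \<Rightarrow> 'a"
  assumes "compact X"
    and "prob_on X P"
    and "r \<in> borel_measurable borel"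
    and "lam \<ge> 0"
    and "T \<in> borel_measurable borel"
    and "\<And>y. T y \<in> X"
    and "\<And>y x. x \<in> X \<Longrightarrow> r x - lam * (norm (x - y))\<^sup>2 \<le> r (T y) - lam * (norm (T y - y))\<^sup>2"
  shows "prob_on X (distr P borel T)
    \<and> (\<forall>Q. prob_on X Q \<longrightarrow> objective r lam P Q \<le> objective r lam P (distr P borel T))"
proof -
  note rm[measurable] = assms(3) and Tm[measurable] = assms(5)
  interpret P: prob_space P using assms(2) unfolding prob_on_def by auto
  have sP: "sets P = sets borel" using assms(2) unfolding prob_on_def by auto
  have spP: "space P = UNIV" using sets_eq_imp_space_eq[OF sP] by simp
  have mP: "measurable P N = measurable borel N" for N :: "'b measure"
    by (rule measurable_cong_sets) (simp_all add: sP)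
  have clX: "closed X" using assms(1) by (rule compact_imp_closed)
  have Xb[measurable]: "X \<in> sets borel" using clX by simp
  obtain B where B: "\<And>x. x \<in> X \<Longrightarrow> norm x \<le> B"
    using compact_imp_bounded[OF assms(1)] unfolding bounded_iff by auto
  have dB: "(norm (x - y))\<^sup>2 \<le> (2*B)\<^sup>2" if "x \<in> X" "y \<in> X" for x y
  proof -
    have "norm (x - y) \<le> norm x + norm y" by (rule norm_triangle_ineq4)
    also have "\<dots> \<le> 2*B" using B[OF that(1)] B[OF that(2)] by simp
    finally show ?thesis by (intro power_mono) auto
  qed
  define x0 where "x0 = T 0"
  have x0X: "x0 \<in> X" unfolding x0_def by (rule assms(6))
  define K where "K = r (T x0) + lam * (2*B)\<^sup>2"
  define L where "L = r x0 - lam * (2*B)\<^sup>2"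
  define g where "g y = r (T y) - lam * (norm (T y - y))\<^sup>2" for y
  define h where "h y = (norm (T y - y))\<^sup>2" for y
  have gm[measurable]: "g \<in> borel_measurable borel" unfolding g_def by measurable
  have hm[measurable]: "h \<in> borel_measurable borel" unfolding h_def by measurable
  have rK: "r x \<le> K" if "x \<in> X" for x
  proof -
    have "r x - lam * (norm (x - x0))\<^sup>2 \<le> r (T x0) - lam * (norm (T x0 - x0))\<^sup>2"
      using assms(7)[OF that] .
    moreover have "lam * (norm (T x0 - x0))\<^sup>2 \<ge> 0" using assms(4) by simp
    moreover have "lam * (norm (x - x0))\<^sup>2 \<le> lam * (2*B)\<^sup>2"
      using dB[OF that x0X] assms(4) by (intro mult_left_mono) auto
    ultimately show ?thesis unfolding K_def by linarith
  qed
  have gL: "L \<le> g y" if "y \<in> X" for y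
  proof -
    have "r x0 - lam * (norm (x0 - y))\<^sup>2 \<le> g y" unfolding g_def using assms(7)[OF x0X] .
    moreover have "lam * (norm (x0 - y))\<^sup>2 \<le> lam * (2*B)\<^sup>2"
      using dB[OF x0X that] assms(4) by (intro mult_left_mono) auto
    ultimately show ?thesis unfolding L_def by linarith
  qed
  have hB: "0 \<le> h y \<and> h y \<le> (2*B)\<^sup>2" if "y \<in> X" for y
    unfolding h_def using dB[OF assms(6) that] by simp
  have gr: "g y \<le> r (T y)" for y unfolding g_def using assms(4) by simp
  have AEP: "AE y in P. y \<in> X" by (rule AE_on[OF assms(2) clX])
  have irT: "integrable P (\<lambda>y. r (T y))"
  proof (rule P.integrable_const_bound[where B="max \<bar>K\<bar> \<bar>L\<bar>"])
    show "AE y in P. norm (r (T y)) \<le> max \<bar>K\<bar> \<bar>L\<bar>"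
      using AEP
    proof eventually_elim
      case (elim y)
      have "L \<le> r (T y)" using gL[OF elim] gr[of y] by linarith
      moreover have "r (T y) \<le> K" using rK[OF assms(6)] .
      ultimately show ?case by auto
    qed
  qed (simp add: mP)
  have ih: "integrable P h"
  proof (rule P.integrable_const_bound[where B="(2*B)\<^sup>2"])
    show "AE y in P. norm (h y) \<le> (2*B)\<^sup>2"
      using AEP by eventually_elim (use hB in auto)
  qed (simp add: mP)
  define A where "A = (\<integral>y. r (T y) \<partial>P)"
  define C where "C = (\<integral>y. h y \<partial>P)"
  define G where "G = A - lam * C"
  have ig: "integrable P g" unfolding g_def using irT ih unfolding h_def by simp
  have Gint: "(\<integral>y. g y \<partial>P) = G"
    unfolding G_def A_def C_def g_def using irT ih unfolding h_def by simp
  have C0: "C \<ge> 0" unfolding C_def h_def by simp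
  define QT where "QT = distr P borel T"
  have TmP: "T \<in> measurable P borel" by (simp add: mP)
  have part1: "prob_on X QT"
    unfolding prob_on_def QT_def
  proof (intro conjI)
    show "prob_space (distr P borel T)" by (rule P.prob_space_distr[OF TmP])
    show "sets (distr P borel T) = sets borel" by simp
    have "emeasure (distr P borel T) X = emeasure P (T -` X \<inter> space P)"
      by (rule emeasure_distr[OF TmP Xb])
    also have "T -` X \<inter> space P = space P" using assms(6) by auto
    finally show "emeasure (distr P borel T) X = 1" by (simp add: P.emeasure_space_1)
  qed
  have EQT: "expect_ereal QT r = ereal A"
  proof -
    have "integrable QT r" unfolding QT_def using irT
      by (subst integrable_distr_eq[OF TmP]) auto
    then have "expect_ereal QT r = ereal (\<integral>x. r x \<partial>QT)" by (rule expect_integrable)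
    also have "(\<integral>x. r x \<partial>QT) = A" unfolding QT_def A_def
      by (rule integral_distr[OF TmP]) simp
    finally show ?thesis .
  qed
  define gT where "gT = distr P (borel \<Otimes>\<^sub>M borel) (\<lambda>y. (T y, y))"
  have pm: "(\<lambda>y. (T y, y)) \<in> measurable P (borel \<Otimes>\<^sub>M borel)" by (simp add: mP)
  have gTc: "gT \<in> couplings QT P"
    unfolding couplings_def gT_def
  proof (intro CollectI conjI)
    show "prob_space (distr P (borel \<Otimes>\<^sub>M borel) (\<lambda>y. (T y, y)))"
      by (rule P.prob_space_distr[OF pm])
    show "sets (distr P (borel \<Otimes>\<^sub>M borel) (\<lambda>y. (T y, y))) = sets (borel \<Otimes>\<^sub>M borel)" by simp
    show "distr (distr P (borel \<Otimes>\<^sub>M borel) (\<lambda>y. (T y, y))) borel fst = QT"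
      unfolding QT_def by (subst distr_distr[OF measurable_fst pm]) (simp add: o_def)
    have "distr (distr P (borel \<Otimes>\<^sub>M borel) (\<lambda>y. (T y, y))) borel snd = distr P borel (\<lambda>y. y)"
      by (subst distr_distr[OF measurable_snd pm]) (simp add: o_def)
    also have "\<dots> = P" by (rule distr_id2) (simp add: sP)
    finally show "distr (distr P (borel \<Otimes>\<^sub>M borel) (\<lambda>y. (T y, y))) borel snd = P" .
  qed
  have WT: "W2sq QT P \<le> ennreal C"
  proof -
    have "W2sq QT P \<le> (\<integral>\<^sup>+ z. ennreal ((norm (fst z - snd z))\<^sup>2) \<partial>gT)"
      unfolding W2sq_def by (rule INF_lower[OF gTc])
    also have "\<dots> = (\<integral>\<^sup>+ y. ennreal (h y) \<partial>P)"
      unfolding gT_def h_def by (subst nn_integral_distr[OF pm]) auto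
    also have "\<dots> = ennreal C" unfolding C_def
      by (rule nn_integral_eq_integral[OF ih]) (simp add: h_def)
    finally show ?thesis .
  qed
  have objT: "ereal G \<le> objective r lam P QT"
  proof -
    have "enn2ereal (W2sq QT P) \<le> enn2ereal (ennreal C)" using WT by (simp add: less_eq_ennreal.rep_eq)
    then have "enn2ereal (W2sq QT P) \<le> ereal C" using C0 by simp
    then have "ereal lam * enn2ereal (W2sq QT P) \<le> ereal lam * ereal C"
      using assms(4) by (intro ereal_mult_left_mono) auto
    then have "ereal A - ereal (lam * C) \<le> ereal A - ereal lam * enn2ereal (W2sq QT P)"
      by (intro ereal_minus_mono) auto
    then show ?thesis unfolding objective_def EQT G_def by simp
  qed
  have main: "objective r lam P Q \<le> ereal G" if Qon: "prob_on X Q" for Q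
  proof -
    interpret Q: prob_space Q using Qon unfolding prob_on_def by auto
    have sQ: "sets Q = sets borel" using Qon unfolding prob_on_def by auto
    have mQ: "measurable Q N = measurable borel N" for N :: "'b measure"
      by (rule measurable_cong_sets) (simp_all add: sQ)
    have AEQ: "AE x in Q. x \<in> X" by (rule AE_on[OF Qon clX])
    have "AE x in Q. r x \<le> K" using AEQ by eventually_elim (rule rK)
    then have cases: "expect_ereal Q r = -\<infinity> \<or> (integrable Q r \<and> expect_ereal Q r = ereal (\<integral>x. r x \<partial>Q))"
      by (intro expect_cases) (auto simp: mQ Q.prob_space_axioms)
    have nn: "0 \<le> ereal lam * enn2ereal (W2sq Q P)" using assms(4) by simp
    show ?thesis
    proof (cases "expect_ereal Q r = -\<infinity>")
      case True
      then show ?thesis unfolding objective_def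
        using nn by (cases "ereal lam * enn2ereal (W2sq Q P)") auto
    next
      case False
      with cases have ir: "integrable Q r" and Ea: "expect_ereal Q r = ereal (\<integral>x. r x \<partial>Q)" by auto
      define a where "a = (\<integral>x. r x \<partial>Q)"
      show ?thesis
      proof (cases "a \<le> G")
        case True
        have "ereal a - ereal lam * enn2ereal (W2sq Q P) \<le> ereal a - 0"
          using nn by (intro ereal_minus_mono) auto
        also have "ereal a - 0 = ereal a" by simp
        also have "ereal a \<le> ereal G" using True by simp
        finally show ?thesis unfolding objective_def Ea a_def[symmetric] .
      next
        case False
        have lam0: "lam \<noteq> 0"
        proof
          assume l0: "lam = 0"
          have "r x \<le> G" if "x \<in> X" for x
          proof -
            have "(\<integral>y. r x \<partial>P) \<le> (\<integral>y. r (T y) \<partial>P)"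
              using assms(7)[OF that] l0 by (intro integral_mono irT) auto
            then show ?thesis unfolding G_def A_def l0 by (simp add: P.prob_space)
          qed
          then have "AE x in Q. r x \<le> G" using AEQ by auto
          then have "(\<integral>x. r x \<partial>Q) \<le> (\<integral>x. G \<partial>Q)"
            by (intro integral_mono_AE ir) auto
          then have "a \<le> G" unfolding a_def by (simp add: Q.prob_space)
          with False show False by simp
        qed
        then have lp: "lam > 0" using assms(4) by simp
        define t where "t = (a - G) / lam"
        have t0: "t \<ge> 0" unfolding t_def using False lp by simp
        have per: "ennreal t \<le> (\<integral>\<^sup>+ z. ennreal ((norm (fst z - snd z))\<^sup>2) \<partial>\<gamma>)"
          if gc: "\<gamma> \<in> couplings Q P" for \<gamma>
        proof -
          interpret \<gamma>: prob_space \<gamma> using gc unfolding couplings_def by auto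
          have sg: "sets \<gamma> = sets (borel \<Otimes>\<^sub>M borel)" using gc unfolding couplings_def by auto
          have d1: "distr \<gamma> borel fst = Q" and d2: "distr \<gamma> borel snd = P"
            using gc unfolding couplings_def by auto
          have mg: "measurable \<gamma> N = measurable (borel \<Otimes>\<^sub>M borel) N" for N :: "'b measure"
            by (rule measurable_cong_sets) (simp_all add: sg)
          have fm: "fst \<in> measurable \<gamma> borel" and sm: "snd \<in> measurable \<gamma> borel"
            by (simp_all add: mg)
          have AE1: "AE z in \<gamma>. fst z \<in> X"
            using AEQ unfolding d1[symmetric] by (subst (asm) AE_distr_iff[OF fm]) auto
          have AE2: "AE z in \<gamma>. snd z \<in> X"
            using AEP unfolding d2[symmetric] by (subst (asm) AE_distr_iff[OF sm]) auto
          define c where "c z = (norm (fst z - snd z))\<^sup>2" for z :: "'a \<times> 'a"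
          have cm: "c \<in> borel_measurable \<gamma>" unfolding c_def mg by measurable
          have ic: "integrable \<gamma> c"
          proof (rule \<gamma>.integrable_const_bound[where B="(2*B)\<^sup>2"])
            show "AE z in \<gamma>. norm (c z) \<le> (2*B)\<^sup>2"
              using AE1 AE2 by eventually_elim (use dB in \<open>auto simp: c_def\<close>)
          qed (rule cm)
          have ir1: "integrable \<gamma> (\<lambda>z. r (fst z))"
            using ir unfolding d1[symmetric] by (subst (asm) integrable_distr_eq[OF fm]) auto
          have ig2: "integrable \<gamma> (\<lambda>z. g (snd z))"
            using ig unfolding d2[symmetric] by (subst (asm) integrable_distr_eq[OF sm]) auto
          have ea: "a = (\<integral>z. r (fst z) \<partial>\<gamma>)"
            unfolding a_def d1[symmetric] by (rule integral_distr[OF fm]) simp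
          have eG: "G = (\<integral>z. g (snd z) \<partial>\<gamma>)"
            unfolding Gint[symmetric] d2[symmetric] by (rule integral_distr[OF sm]) simp
          have "(\<integral>z. r (fst z) - lam * c z \<partial>\<gamma>) \<le> (\<integral>z. g (snd z) \<partial>\<gamma>)"
          proof (rule integral_mono_AE)
            show "integrable \<gamma> (\<lambda>z. r (fst z) - lam * c z)" using ir1 ic by simp
            show "integrable \<gamma> (\<lambda>z. g (snd z))" by (rule ig2)
            show "AE z in \<gamma>. r (fst z) - lam * c z \<le> g (snd z)"
              using AE1 by eventually_elim (use assms(7) in \<open>auto simp: c_def g_def\<close>)
          qed
          then have "a - lam * (\<integral>z. c z \<partial>\<gamma>) \<le> G"
            using ir1 ic unfolding ea eG by simp
          then have "t \<le> (\<integral>z. c z \<partial>\<gamma>)" unfolding t_def using lp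
            by (simp add: divide_le_eq mult.commute)
          moreover have "(\<integral>\<^sup>+ z. ennreal (c z) \<partial>\<gamma>) = ennreal (\<integral>z. c z \<partial>\<gamma>)"
            by (rule nn_integral_eq_integral[OF ic]) (simp add: c_def)
          ultimately show ?thesis unfolding c_def by (simp add: ennreal_leI)
        qed
        have "ennreal t \<le> W2sq Q P" unfolding W2sq_def by (rule INF_greatest) (rule per)
        then have "enn2ereal (ennreal t) \<le> enn2ereal (W2sq Q P)" by (simp add: less_eq_ennreal.rep_eq)
        then have "ereal t \<le> enn2ereal (W2sq Q P)" using t0 by simp
        then have "ereal lam * ereal t \<le> ereal lam * enn2ereal (W2sq Q P)"
          using assms(4) by (intro ereal_mult_left_mono) auto
        moreover have "lam * t = a - G" unfolding t_def using lp by simp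
        ultimately have "ereal (a - G) \<le> ereal lam * enn2ereal (W2sq Q P)" by simp
        then have "ereal a - ereal lam * enn2ereal (W2sq Q P) \<le> ereal a - ereal (a - G)"
          by (intro ereal_minus_mono) auto
        then show ?thesis unfolding objective_def Ea a_def[symmetric] by simp
      qed
    qed
  qed
  show ?thesis using part1 main objT unfolding QT_def by (meson order_trans)
qed
end
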